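(* Let $C_n=\frac{1}{n+1}\binom{2n}{n}$ ($n\ge0$) be the Catalan numbers. Then for every $n\ge0$, $$C_{n+1}=\sum_{h=0}^n\binom{n}{h}(-1)^h4^{n-h}C_{h+1};$$ that is, $L^{(-1,4)}(\sigma(C))=\sigma(C)$.
   Context: $\sigma$ is the shift operator: $\sigma((a_0,a_1,a_2,\ldots))=(a_1,a_2,\ldots)$. For $h,y$, $L^{(h,y)}(a)$ is the sequence with $n$-th term $\sum_{i=0}^n\binom{n}{i}h^iy^{n-i}a_i$. *)

theory Defs
  imports Complex_Main
begin

definition catalan :: "nat \<Rightarrow> real" where
  "catalan n = real (2 * n choose n) / real (n + 1)"

definition shift :: "(nat \<Rightarrow> 'a) \<Rightarrow> nat \<Rightarrow> 'a" where
  "shift a = (\<lambda>n. a (Suc n))"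

definition binom_transform :: "'a::comm_ring_1 \<Rightarrow> 'a \<Rightarrow> (nat \<Rightarrow> 'a) \<Rightarrow> nat \<Rightarrow> 'a" where
  "binom_transform h y a = (\<lambda>n. \<Sum>i=0..n. of_nat (n choose i) * h ^ i * y ^ (n - i) * a i)"

end

theory Submission
  imports Defs
begin

lemma aux_nat: "(2*m+2)*Y = X*(m+1) \<Longrightarrow> (2*m+1)*Z = Y*(m+1) \<Longrightarrow> (m+1)*X = 2*(2*m+1)*(Z::nat)"
proof -
  assume a: "(2*m+2)*Y = X*(m+1)" and b: "(2*m+1)*Z = Y*(m+1)"
  have "(m+1)*((m+1)*X) = (m+1) * ((2*m+2)*Y)" using a by (simp add: mult.commute)
  also have "\<dots> = (m+1) * (2 * (Y*(m+1)))" by (simp add: algebra_simps)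
  also have "\<dots> = (m+1) * (2 * ((2*m+1)*Z))" by (simp only: b[symmetric])
  also have "\<dots> = (m+1) * (2*(2*m+1)*Z)" by (simp add: algebra_simps)
  finally have "(m+1)*((m+1)*X) = (m+1)*(2*(2*m+1)*Z)" .
  then show ?thesis by (rule mult_left_cancel[THEN iffD1, rotated]) simp
qed

lemma cat_binom_rec: "(m+1) * (2*(m+1) choose (m+1)) = 2*(2*m+1) * (2*m choose m)"
proof -
  have a: "Suc (2*m+1) * ((2*m+1) choose m) = ((2*m+2) choose (m+1)) * (m+1)"
    using Suc_times_binomial_eq[of "2*m+1" m] by simp
  have b: "Suc (2*m) * ((2*m) choose m) = ((2*m+1) choose (m+1)) * (m+1)"
    using Suc_times_binomial_eq[of "2*m" m] by simp
  have c: "((2*m+1) choose (m+1)) = ((2*m+1) choose m)"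
    using binomial_symmetric[of "m+1" "2*m+1"] by simp
  have a': "(2*m+2) * ((2*m+1) choose m) = ((2*(m+1)) choose (m+1)) * (m+1)"
    using a by (simp add: algebra_simps)
  have b': "(2*m+1) * ((2*m) choose m) = ((2*m+1) choose m) * (m+1)"
    using b c by simp
  show ?thesis by (rule aux_nat[OF a' b'])
qed

definition bb :: "nat \<Rightarrow> real" where "bb h = catalan (Suc h)"
definition uu :: "nat \<Rightarrow> real" where "uu h = (-1)^h * bb h / 4^h"

lemma brec: "real (h+3) * bb (Suc h) = 2*(2*real h+3) * bb h"
proof -
  define A where "A = (2 * Suc (Suc h) choose Suc (Suc h))"
  define B where "B = (2 * Suc h choose Suc h)"
  have n: "(Suc h+1) * A = 2*(2*Suc h+1) * B"
    using cat_binom_rec[of "Suc h"] unfolding A_def B_def by (simp only: Suc_eq_plus1)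
  have e: "real (Suc h+1) * real A = 2*(2*real h+3) * real B"
  proof -
    have "real ((Suc h+1) * A) = real (2*(2*Suc h+1) * B)" using n by (simp only:)
    then show ?thesis by (simp only: of_nat_mult) simp
  qed
  have c1: "bb (Suc h) = real A / real (Suc (Suc h) + 1)"
    by (simp only: bb_def catalan_def A_def)
  have c2: "bb h = real B / real (Suc h + 1)"
    by (simp only: bb_def catalan_def B_def)
  have eA: "real A = 2*(2*real h+3)*real B / (real h + 2)" using e by (simp add: field_simps)
  have d1: "real (Suc (Suc h) + 1) = real h + 3" "real (h+3) = real h + 3" "real (Suc h + 1) = real h + 2" by simp_all
  have nz: "real h + 3 \<noteq> 0" "real h + 2 \<noteq> 0" by (simp_all add: add_nonneg_pos)
  have "(real h + 3) * (real A / (real h + 3)) = real A" using nz by simp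
  then show ?thesis unfolding c1 c2 d1 eA by simp
qed

lemma aux_u:
  fixes u1 u0 b1 b0 s q r3 c :: real
  assumes "u1 = -(b1*s/(4*q))" "u0 = s*b0/q" "r3*b1 = 2*c*b0" "q \<noteq> 0"
  shows "2*r3*u1 = -(c*u0)"
proof -
  have "2*r3*u1 = -((r3*b1)*s/(2*q))" using assms(1,4) by (simp add: field_simps)
  also have "\<dots> = -(c*u0)" using assms(2-4) by (simp add: field_simps)
  finally show ?thesis .
qed

lemma urec: "2 * real (h+3) * uu (Suc h) = - ((2*real h+3) * uu h)"
proof (rule aux_u)
  show "uu (Suc h) = - (bb (Suc h) * (-1)^h / (4 * 4^h))" by (simp add: uu_def)
  show "uu h = (-1)^h * bb h / 4^h" by (simp add: uu_def)
  show "real (h+3) * bb (Suc h) = 2 * (2*real h+3) * bb h" by (rule brec)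
  show "(4::real)^h \<noteq> 0" by simp
qed

lemma aux_real: "(real n * C = Y + (C + Y) * real k) \<Longrightarrow> (real n + 1) * C = (C + Y) * (real k + 1)"
  by algebra

lemma aux_real2: "(real n + 1) * C = (C + Y) * (real k + 1) \<Longrightarrow> (real k + 1) * Y = (real n - real k) * C"
  by algebra

lemma binom_abs: "real (k+1) * real (n choose (k+1)) = (real n - real k) * real (n choose k)"
proof (cases "k \<le> n")
  case True
  have "real (Suc n * (n choose k)) = real ((Suc n choose Suc k) * Suc k)"
    using Suc_times_binomial_eq[of n k] by metis
  hence "(real n + 1) * real (n choose k) = (real (n choose k) + real (n choose Suc k)) * (real k + 1)"
    by simp (rule aux_real)
  then have "(real k + 1) * real (n choose Suc k) = (real n - real k) * real (n choose k)"
    by (rule aux_real2)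
  then show ?thesis by (simp add: add.commute)
next
  case False
  then have a: "n choose k = 0" "n choose (k+1) = 0" by (simp_all add: binomial_eq_0)
  show ?thesis unfolding a by simp
qed

lemma aux_tm:
  fixes A B P U GS GH nr kr :: real
  assumes h: "(kr+1)*B = (nr-kr)*A" and "P = A+B" "GS = 2*(2*kr+5)*B*U" "GH = -4*(kr+3)*A*U"
  shows "4*(nr+3)*P*U - 2*(2*nr+3)*B*U = GS - GH"
proof -
  have "4*(nr+3)*P*U - 2*(2*nr+3)*B*U - (GS - GH) = 4*U*((nr-kr)*A - (kr+1)*B)"
    using assms(2-4) by (simp add: algebra_simps)
  also have "\<dots> = 0" using h by simp
  finally show ?thesis by simp
qed

definition TT :: "nat \<Rightarrow> real" where "TT n = (\<Sum>h\<le>n. real (n choose h) * uu h)"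

lemma TT_rec: "4 * real (n+3) * TT (Suc n) = 2 * (2*real n + 3) * TT n"
proof -
  define g where "g h = (if h = 0 then 0 else - 4 * real (h+2) * real (n choose (h-1)) * uu h)" for h
  have tm: "4 * real (n+3) * real (Suc n choose h) * uu h - 2 * (2*real n+3) * real (n choose h) * uu h
      = g (Suc h) - g h" for h
  proof (cases h)
    case 0
    have "2 * real (0+3) * uu (Suc 0) = - ((2*real 0+3) * uu 0)" by (rule urec)
    then show ?thesis using 0 by (simp add: g_def algebra_simps)
  next
    case (Suc k)
    have u: "2 * real (Suc k+3) * uu (Suc (Suc k)) = - ((2*real (Suc k)+3) * uu (Suc k))" by (rule urec)
    have ba: "real (k+1) * real (n choose (k+1)) = (real n - real k) * real (n choose k)" by (rule binom_abs)
    have gS: "g (Suc h) = 2 * (2 * real k + 5) * real (n choose Suc k) * uu (Suc k)"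
    proof -
      have "g (Suc h) = - 2 * real (n choose Suc k) * (2 * real (Suc k + 3) * uu (Suc (Suc k)))"
        using Suc by (simp add: g_def algebra_simps)
      also have "\<dots> = 2 * (2 * real k + 5) * real (n choose Suc k) * uu (Suc k)"
        unfolding u by (simp add: algebra_simps)
      finally show ?thesis .
    qed
    have gh0: "g h = - 4 * real (k+3) * real (n choose k) * uu (Suc k)"
      using Suc by (simp add: g_def algebra_simps)
    have pas: "real (Suc n choose h) = real (n choose k) + real (n choose Suc k)"
      using Suc by simp
    have p1: "(real k+1)*real(n choose Suc k) = (real n - real k)*real(n choose k)" using ba by (simp add: add.commute)
    have p4: "g h = -4*(real k+3)*real(n choose k)*uu(Suc k)" using gh0 by simp
    have "4*(real n+3)*real (Suc n choose h)*uu (Suc k) - 2*(2*real n+3)*real (n choose Suc k)*uu (Suc k) = g (Suc h) - g h"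
      by (rule aux_tm[OF p1 pas gS p4])
    then show ?thesis using Suc by simp
  qed
  have "(\<Sum>h<n+2. 4 * real (n+3) * real (Suc n choose h) * uu h - 2 * (2*real n+3) * real (n choose h) * uu h)
      = g (n+2) - g 0"
    unfolding tm by (rule sum_lessThan_telescope)
  also have "\<dots> = 0" by (simp add: g_def)
  finally have z: "(\<Sum>h<n+2. 4 * real (n+3) * real (Suc n choose h) * uu h - 2 * (2*real n+3) * real (n choose h) * uu h) = 0" .
  have t1: "TT (Suc n) = (\<Sum>h<n+2. real (Suc n choose h) * uu h)"
    unfolding TT_def by (simp only: lessThan_Suc_atMost[symmetric] add_2_eq_Suc')
  have t2: "TT n = (\<Sum>h<n+2. real (n choose h) * uu h)"
    unfolding TT_def by (simp add: lessThan_Suc_atMost[symmetric] add_2_eq_Suc')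
  have s1: "(\<Sum>h<n+2. 4 * real (n+3) * real (Suc n choose h) * uu h) = 4 * real (n+3) * TT (Suc n)"
    unfolding t1 sum_distrib_left by (simp only: mult.assoc)
  have s2: "(\<Sum>h<n+2. 2 * (2*real n+3) * real (n choose h) * uu h) = 2 * (2*real n+3) * TT n"
    unfolding t2 sum_distrib_left by (simp only: mult.assoc)
  show ?thesis using z s1 s2 by (simp add: sum_subtractf)
qed

lemma TT_eq: "4^n * TT n = bb n"
proof (induction n)
  case 0
  then show ?case by (simp add: TT_def uu_def)
next
  case (Suc n)
  have "real (n+3) * (4^Suc n * TT (Suc n)) = 4^n * (4 * real (n+3) * TT (Suc n))"
    by (simp add: algebra_simps)
  also have "\<dots> = 2 * (2*real n + 3) * (4^n * TT n)" unfolding TT_rec by (simp add: algebra_simps)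
  also have "\<dots> = real (n+3) * bb (Suc n)" unfolding Suc brec by simp
  finally show ?case by simp
qed

theorem theorem17:
  shows "binom_transform (-1) 4 (shift catalan) = shift catalan"
proof
  fix n
  have "binom_transform (-1) 4 (shift catalan) n = (\<Sum>h=0..n. 4^n * (real (n choose h) * uu h))"
    unfolding binom_transform_def shift_def
  proof (rule sum.cong[OF refl])
    fix h assume "h \<in> {0..n}"
    hence "h \<le> n" by simp
    hence "(4::real)^n = 4^(n-h) * 4^h" by (simp add: power_add[symmetric])
    then show "of_nat (n choose h) * (- 1) ^ h * 4 ^ (n - h) * catalan (Suc h) = 4 ^ n * (real (n choose h) * uu h)"
      by (simp add: uu_def bb_def field_simps)
  qed
  also have "\<dots> = 4^n * TT n" by (simp add: TT_def sum_distrib_left atLeast0AtMost)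
  also have "\<dots> = shift catalan n" by (simp add: TT_eq bb_def shift_def)
  finally show "binom_transform (-1) 4 (shift catalan) n = shift catalan n" .
qed

end
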